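(* Let $G=(V,\pi)$ be a two-player game with two questions per player ($\{A,A'\}$ for Alice, $\{B,B'\}$ for Bob) and finite answer sets. If $\pi(X,Y)=0$ for some question pair $(X,Y)$, then $\omega^*(G)=\omega(G)$.
   Context: $\omega(G)$ is the classical value: the supremum of $\sum_{x,y}\pi(x,y)V(\alpha(x),\beta(y)|x,y)$ over functions $\alpha,\beta$ from questions to answers. $\omega^*(G)$ is the entangled value: the supremum, over finite-dimensional states $|\psi\rangle\in\mathbb{C}^{d_A}\otimes\mathbb{C}^{d_B}$ and POVMs $\{A^x_a\}_a,\{B^y_b\}_b$, of $\sum_{x,y}\pi(x,y)\sum_{a,b}V(a,b|x,y)\langle\psi|A^x_a\otimes B^y_b|\psi\rangle$. *)

theory Defs
  imports Complex_Main
begin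

text \<open>Two-player games with question sets bool (Alice: False = A, True = A';
 Bob: False = B, True = B'), finite answer types 'a (Alice) and 'b (Bob),
 question distribution pi and predicate V a b x y = V(a,b|x,y).
 Finite-dimensional matrices of size d are functions nat => nat => complex
 with indices < d; a state in C^dA (x) C^dB is a coefficient array psi i j.\<close>

definition prob_dist :: "(bool \<Rightarrow> bool \<Rightarrow> real) \<Rightarrow> bool" where
  "prob_dist \<pi> \<longleftrightarrow> (\<forall>x y. \<pi> x y \<ge> 0) \<and> (\<Sum>x\<in>UNIV. \<Sum>y\<in>UNIV. \<pi> x y) = 1"

definition game_payoff :: "(bool \<Rightarrow> bool \<Rightarrow> real) \<Rightarrow> ('a \<Rightarrow> 'b \<Rightarrow> bool \<Rightarrow> bool \<Rightarrow> bool)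
    \<Rightarrow> (bool \<Rightarrow> bool \<Rightarrow> 'a \<Rightarrow> 'b \<Rightarrow> real) \<Rightarrow> real" where
  "game_payoff \<pi> V p = (\<Sum>x\<in>UNIV. \<Sum>y\<in>UNIV. \<pi> x y *
      (\<Sum>a\<in>UNIV. \<Sum>b\<in>UNIV. (if V a b x y then 1 else 0) * p x y a b))"

definition classical_value :: "(bool \<Rightarrow> bool \<Rightarrow> real) \<Rightarrow> ('a::finite \<Rightarrow> 'b::finite \<Rightarrow> bool \<Rightarrow> bool \<Rightarrow> bool) \<Rightarrow> real" where
  "classical_value \<pi> V = Sup {(\<Sum>x\<in>UNIV. \<Sum>y\<in>UNIV. \<pi> x y * (if V (\<alpha> x) (\<beta> y) x y then 1 else 0))
      | (\<alpha> :: bool \<Rightarrow> 'a) (\<beta> :: bool \<Rightarrow> 'b). True}"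

definition hermitian :: "nat \<Rightarrow> (nat \<Rightarrow> nat \<Rightarrow> complex) \<Rightarrow> bool" where
  "hermitian d M \<longleftrightarrow> (\<forall>i<d. \<forall>j<d. M i j = cnj (M j i))"

definition psd :: "nat \<Rightarrow> (nat \<Rightarrow> nat \<Rightarrow> complex) \<Rightarrow> bool" where
  "psd d M \<longleftrightarrow> hermitian d M \<and>
     (\<forall>v :: nat \<Rightarrow> complex. Re (\<Sum>i<d. \<Sum>j<d. cnj (v i) * M i j * v j) \<ge> 0)"

definition povm :: "nat \<Rightarrow> ('a::finite \<Rightarrow> nat \<Rightarrow> nat \<Rightarrow> complex) \<Rightarrow> bool" where
  "povm d P \<longleftrightarrow> (\<forall>a. psd d (P a)) \<and>
     (\<forall>i<d. \<forall>j<d. (\<Sum>a\<in>UNIV. P a i j) = (if i = j then 1 else 0))"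

definition unit_state :: "nat \<Rightarrow> nat \<Rightarrow> (nat \<Rightarrow> nat \<Rightarrow> complex) \<Rightarrow> bool" where
  "unit_state dA dB \<psi> \<longleftrightarrow> (\<Sum>i<dA. \<Sum>j<dB. (cmod (\<psi> i j))\<^sup>2) = 1"

text \<open>The amplitude <psi| M (x) N |psi>.\<close>
definition tensor_expect :: "nat \<Rightarrow> nat \<Rightarrow> (nat \<Rightarrow> nat \<Rightarrow> complex) \<Rightarrow> (nat \<Rightarrow> nat \<Rightarrow> complex)
    \<Rightarrow> (nat \<Rightarrow> nat \<Rightarrow> complex) \<Rightarrow> complex" where
  "tensor_expect dA dB \<psi> M N = (\<Sum>i<dA. \<Sum>j<dB. \<Sum>i'<dA. \<Sum>j'<dB.
      cnj (\<psi> i j) * M i i' * N j j' * \<psi> i' j')"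

definition entangled_value :: "(bool \<Rightarrow> bool \<Rightarrow> real) \<Rightarrow> ('a::finite \<Rightarrow> 'b::finite \<Rightarrow> bool \<Rightarrow> bool \<Rightarrow> bool) \<Rightarrow> real" where
  "entangled_value \<pi> V = Sup {game_payoff \<pi> V (\<lambda>x y a b. Re (tensor_expect dA dB \<psi> (Am x a) (Bm y b)))
      | dA dB \<psi> (Am :: bool \<Rightarrow> 'a \<Rightarrow> nat \<Rightarrow> nat \<Rightarrow> complex) (Bm :: bool \<Rightarrow> 'b \<Rightarrow> nat \<Rightarrow> nat \<Rightarrow> complex).
         unit_state dA dB \<psi> \<and> (\<forall>x. povm dA (Am x)) \<and> (\<forall>y. povm dB (Bm y))}"

end

theory Submission
  imports Defs
begin


definition qf :: "nat set \<Rightarrow> (nat \<Rightarrow> nat \<Rightarrow> complex) \<Rightarrow> (nat \<Rightarrow> complex) \<Rightarrow> complex" where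
  "qf S M v = (\<Sum>i\<in>S. \<Sum>j\<in>S. cnj (v i) * M i j * v j)"

lemma qf_insert:
  assumes "finite F" "k \<notin> F"
  shows "qf (insert k F) M v = cnj (v k) * M k k * v k + (\<Sum>j\<in>F. cnj (v k) * M k j * v j)
     + (\<Sum>i\<in>F. cnj (v i) * M i k * v k) + qf F M v"
  using assms by (simp add: qf_def sum.distrib algebra_simps)

lemma qf_restrict:
  assumes "finite F" "k \<notin> F"
  shows "qf (insert k F) M (v(k := 0)) = qf F M v"
proof -
  have "qf F M (v(k:=0)) = qf F M v" unfolding qf_def
    using assms(2) by (intro sum.cong refl) auto
  then show ?thesis using assms by (simp add: qf_insert)
qed



lemma sum_two:
  assumes "finite S" "k \<in> S" "j \<in> S" "k \<noteq> j" "\<forall>i\<in>S. i \<noteq> k \<and> i \<noteq> j \<longrightarrow> f i = 0"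
  shows "(\<Sum>i\<in>S. f i) = f k + (f j :: complex)"
proof -
  have "(\<Sum>i\<in>S. f i) = (\<Sum>i\<in>{k,j}. f i)"
    using assms by (intro sum.mono_neutral_right) auto
  then show ?thesis using assms(4) by simp
qed

lemma qf_two:
  assumes "finite S" "k \<in> S" "j \<in> S" "k \<noteq> j" "\<forall>i. i \<noteq> k \<and> i \<noteq> j \<longrightarrow> v i = 0"
  shows "qf S N v = cnj (v k) * N k k * v k + cnj (v k) * N k j * v j + cnj (v j) * N j k * v k + cnj (v j) * N j j * v j"
proof -
  have inner: "(\<Sum>l\<in>S. cnj (v i) * N i l * v l) = cnj (v i) * N i k * v k + cnj (v i) * N i j * v j" for i
    by (rule sum_two) (use assms in auto)
  have "qf S N v = (\<Sum>i\<in>S. cnj (v i) * N i k * v k + cnj (v i) * N i j * v j)"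
    unfolding qf_def using inner by simp
  also have "\<dots> = (cnj (v k) * N k k * v k + cnj (v k) * N k j * v j) + (cnj (v j) * N j k * v k + cnj (v j) * N j j * v j)"
    by (rule sum_two) (use assms in auto)
  finally show ?thesis by (simp add: algebra_simps)
qed



lemma zero_row:
  assumes fin: "finite S" and kS: "k \<in> S" and jS: "j \<in> S" and jk: "j \<noteq> k"
    and hjk: "N j k = cnj (N k j)"
    and pos: "\<forall>v. Re (qf S N v) \<ge> 0"
    and c0: "N k k = 0"
  shows "N k j = 0"
proof (rule ccontr)
  assume ne: "N k j \<noteq> 0"
  have key: "Re (qf S N (\<lambda>i. if i = k then t else if i = j then 1 else 0)) = 2 * Re (cnj t * N k j) + Re (N j j)" for t
  proof -
    have "qf S N (\<lambda>i. if i = k then t else if i = j then 1 else 0) = cnj t * N k j + N j k * t + N j j"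
      using qf_two[OF fin kS jS jk[symmetric], of "(\<lambda>i. if i = k then t else if i = j then 1 else 0)" N] jk c0
      by simp
    then show ?thesis using hjk by simp
  qed
  define s where "s = (Re (N j j) + 1) / (2 * (cmod (N k j))^2)"
  have cpos: "(cmod (N k j))^2 > 0" using ne by simp
  have e1: "Re (cnj (- (of_real s * N k j)) * N k j) = - s * (cmod (N k j))^2"
    unfolding cmod_power2 by (simp add: algebra_simps power2_eq_square)
  have e2: "- s * (cmod (N k j))^2 = - (Re (N j j) + 1) / 2"
    using cpos by (simp add: s_def field_simps)
  have e3: "Re (cnj (- (of_real s * N k j)) * N k j) = - (Re (N j j) + 1) / 2" using e1 e2 by simp
  define w where "w = (\<lambda>i. if i = k then - (of_real s * N k j) else if i = j then (1::complex) else 0)"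
  have "Re (qf S N w) = 2 * (- (Re (N j j) + 1) / 2) + Re (N j j)"
    unfolding w_def key e3 by simp
  then have "Re (qf S N w) = -1" by (simp add: field_simps)
  then show False using pos by (metis neg_0_le_iff_le not_one_le_zero)
qed



lemma qf_single:
  assumes "finite S" "k \<in> S"
  shows "qf S N (\<lambda>i. if i = k then 1 else 0) = N k k"
proof -
  have e: "cnj (if i = k then 1 else 0) * N i j * (if j = k then 1 else 0) = (if j = k then (if i = k then N k k else 0) else 0)" for i j
    by auto
  show ?thesis unfolding qf_def e using assms by simp
qed

lemma qf_zero_ext:
  assumes fin: "finite F" and kF: "k \<notin> F"
    and z1: "\<forall>j\<in>F. N k j = 0" and z2: "\<forall>j\<in>F. N j k = 0" and z3: "N k k = 0"
  shows "qf (insert k F) N v = qf F N v"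
  using assms by (simp add: qf_insert)

lemma schur_pos:
  "finite S \<Longrightarrow> (\<forall>i\<in>S. \<forall>j\<in>S. N i j = cnj (N j i)) \<Longrightarrow> (\<forall>v. Re (qf S N v) \<ge> 0)
   \<Longrightarrow> (\<forall>v. Re (qf S G v) \<ge> 0) \<Longrightarrow> Re (\<Sum>i\<in>S. \<Sum>j\<in>S. G i j * N i j) \<ge> 0"
proof (induction S arbitrary: N rule: finite_induct)
  case empty
  then show ?case by simp
next
  case (insert k F)
  note fin = insert.hyps(1) and kF = insert.hyps(2)
  have hN: "\<forall>i\<in>insert k F. \<forall>j\<in>insert k F. N i j = cnj (N j i)" by fact
  have pN: "\<forall>v. Re (qf (insert k F) N v) \<ge> 0" by fact
  have pG: "\<forall>v. Re (qf (insert k F) G v) \<ge> 0" by fact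
  have pG': "\<forall>v. Re (qf F G v) \<ge> 0"
    using pG qf_restrict[OF fin kF, of G] by metis
  define c where "c = Re (N k k)"
  have "N k k = cnj (N k k)" using hN by auto
  then have "Im (N k k) = 0" by (simp add: complex_eq_iff)
  then have Nkk: "N k k = of_real c" unfolding c_def by (simp add: complex_eq_iff)
  have c0: "c \<ge> 0" using pN[rule_format, of "\<lambda>i. if i = k then 1 else 0"] qf_single[of "insert k F" k N] fin
    by (simp add: c_def)
  show ?case
  proof (cases "c = 0")
    case True
    have zk: "N k j = 0" if "j \<in> F" for j
    proof -
      have "N j k = cnj (N k j)" using hN that by blast
      moreover have "j \<noteq> k" using that kF by auto
      ultimately show ?thesis using zero_row[of "insert k F" k j N] fin that pN Nkk True by simp
    qed
    have zk2: "N j k = 0" if "j \<in> F" for j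
    proof -
      have "N j k = cnj (N k j)" using hN that by blast
      then show ?thesis using zk that by simp
    qed
    have Nkk0: "N k k = 0" using Nkk True by simp
    have pNF: "\<forall>v. Re (qf F N v) \<ge> 0"
      using pN qf_zero_ext[OF fin kF] zk zk2 Nkk0 by metis
    have hF: "\<forall>i\<in>F. \<forall>j\<in>F. N i j = cnj (N j i)" using hN by blast
    have "(\<Sum>i\<in>insert k F. \<Sum>j\<in>insert k F. G i j * N i j) = (\<Sum>i\<in>F. \<Sum>j\<in>F. G i j * N i j)"
    proof -
      have a1: "(\<Sum>j\<in>insert k F. G k j * N k j) = 0"
        using fin kF zk Nkk0 by (simp add: sum.insert)
      have a2: "(\<Sum>j\<in>insert k F. G i j * N i j) = (\<Sum>j\<in>F. G i j * N i j)" if "i \<in> F" for i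
        using fin kF zk2 that by (simp add: sum.insert)
      have "(\<Sum>i\<in>insert k F. \<Sum>j\<in>insert k F. G i j * N i j) = (\<Sum>j\<in>insert k F. G k j * N k j) + (\<Sum>i\<in>F. \<Sum>j\<in>insert k F. G i j * N i j)"
        using fin kF by (rule sum.insert)
      also have "(\<Sum>i\<in>F. \<Sum>j\<in>insert k F. G i j * N i j) = (\<Sum>i\<in>F. \<Sum>j\<in>F. G i j * N i j)"
        by (rule sum.cong[OF refl a2])
      finally show ?thesis using a1 by simp
    qed
    then show ?thesis using insert.IH[OF hF pNF pG'] by simp
  next
    case False
    then have cpos: "c > 0" using c0 by simp
    have hk: "cnj (N k i) = N i k" if "i \<in> insert k F" for i
    proof -
      have "N i k = cnj (N k i)" using hN that by blast
      then show ?thesis by simp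
    qed
    have hk2: "\<And>i. i \<in> insert k F \<Longrightarrow> cnj (N k i) = N i k" using hk by blast
    define N' where "N' = (\<lambda>i j. N i j - N i k * N k j / of_real c)"
    have hF: "\<forall>i\<in>F. \<forall>j\<in>F. N' i j = cnj (N' j i)"
    proof (intro ballI)
      fix i j assume ij: "i \<in> F" "j \<in> F"
      have "N i j = cnj (N j i)" "N i k = cnj (N k i)" "N k j = cnj (N j k)" using hN ij by blast+
      then show "N' i j = cnj (N' j i)" unfolding N'_def by (simp add: mult.commute)
    qed
    have pNF: "\<forall>v. Re (qf F N' v) \<ge> 0"
    proof
      fix v
      define a where "a = (\<Sum>j\<in>F. N k j * v j)"
      define w where "w = v(k := - a / of_real c)"
      have wF: "\<And>j. j \<in> F \<Longrightarrow> w j = v j" using kF unfolding w_def by auto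
      have s1: "(\<Sum>j\<in>F. cnj (w k) * N k j * w j) = cnj (w k) * a"
        unfolding a_def using wF by (simp add: sum_distrib_left mult.assoc)
      have s2: "(\<Sum>i\<in>F. cnj (w i) * N i k * w k) = cnj a * w k"
      proof -
        have "cnj a = (\<Sum>i\<in>F. cnj (v i) * N i k)"
          unfolding a_def by (simp add: hk mult.commute cong: sum.cong)
        then show ?thesis using wF by (simp add: sum_distrib_right)
      qed
      have s3: "qf F N w = qf F N v" unfolding qf_def using wF by simp
      have qfN': "qf F N' v = qf F N v - cnj a * a / of_real c"
      proof -
        have "qf F N' v = qf F N v - (\<Sum>i\<in>F. \<Sum>j\<in>F. cnj (v i) * (N i k * N k j / of_real c) * v j)"
          unfolding qf_def N'_def by (simp add: algebra_simps sum_subtractf)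
        also have "(\<Sum>i\<in>F. \<Sum>j\<in>F. cnj (v i) * (N i k * N k j / of_real c) * v j)
             = (\<Sum>i\<in>F. cnj (v i) * N i k) * (\<Sum>j\<in>F. N k j * v j) / of_real c"
          unfolding sum_product sum_divide_distrib by (intro sum.cong refl) (simp add: algebra_simps)
        also have "(\<Sum>i\<in>F. cnj (v i) * N i k) = cnj a"
          unfolding a_def by (simp add: hk mult.commute cong: sum.cong)
        finally show ?thesis unfolding a_def by simp
      qed
      have "qf (insert k F) N w = cnj (w k) * N k k * w k + cnj (w k) * a + cnj a * w k + qf F N v"
        using qf_insert[OF fin kF, of N w] s1 s2 s3 by simp
      also have "\<dots> = qf F N v - cnj a * a / of_real c"
        unfolding w_def Nkk using cpos by (simp add: field_simps complex_eq_iff)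
      finally have "qf F N' v = qf (insert k F) N w" using qfN' by simp
      then show "Re (qf F N' v) \<ge> 0" using pN by simp
    qed
    have IH: "Re (\<Sum>i\<in>F. \<Sum>j\<in>F. G i j * N' i j) \<ge> 0" using insert.IH[OF hF pNF pG'] .
    have N'k1: "N' i k = 0" for i unfolding N'_def Nkk using cpos by simp
    have N'k2: "N' k j = 0" for j unfolding N'_def Nkk using cpos by simp
    have split: "(\<Sum>i\<in>insert k F. \<Sum>j\<in>insert k F. G i j * N i j)
       = (\<Sum>i\<in>insert k F. \<Sum>j\<in>insert k F. G i j * (N i k * N k j / of_real c))
         + (\<Sum>i\<in>insert k F. \<Sum>j\<in>insert k F. G i j * N' i j)"
      unfolding N'_def by (simp add: algebra_simps sum.distrib[symmetric])
    have t2: "(\<Sum>i\<in>insert k F. \<Sum>j\<in>insert k F. G i j * N' i j) = (\<Sum>i\<in>F. \<Sum>j\<in>F. G i j * N' i j)"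
      using fin kF N'k1 N'k2 by simp
    have t1: "(\<Sum>i\<in>insert k F. \<Sum>j\<in>insert k F. G i j * (N i k * N k j / of_real c))
        = qf (insert k F) G (\<lambda>j. N k j) / of_real c"
    proof -
      have "qf (insert k F) G (\<lambda>j. N k j) = (\<Sum>i\<in>insert k F. \<Sum>j\<in>insert k F. N i k * G i j * N k j)"
        unfolding qf_def using hk2 by (intro sum.cong refl) simp
      then show ?thesis by (simp add: sum_divide_distrib algebra_simps)
    qed
    have "Re (qf (insert k F) G (\<lambda>j. N k j) / of_real c) \<ge> 0"
      using pG cpos by (simp add: Re_divide_of_real)
    then show ?thesis using split t1 t2 IH by simp
  qed
qed



definition Gm :: "nat \<Rightarrow> (nat \<Rightarrow> nat \<Rightarrow> complex) \<Rightarrow> (nat \<Rightarrow> nat \<Rightarrow> complex) \<Rightarrow> nat \<Rightarrow> nat \<Rightarrow> complex" where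
  "Gm dA \<psi> M j j' = (\<Sum>i<dA. \<Sum>i'<dA. cnj (\<psi> i j) * M i i' * \<psi> i' j')"

lemma tensor_expect_Gm:
  "tensor_expect dA dB \<psi> M N = (\<Sum>j<dB. \<Sum>j'<dB. Gm dA \<psi> M j j' * N j j')"
proof -
  have "tensor_expect dA dB \<psi> M N = (\<Sum>i<dA. \<Sum>j<dB. \<Sum>i'<dA. \<Sum>j'<dB. cnj (\<psi> i j) * M i i' * \<psi> i' j' * N j j')"
    unfolding tensor_expect_def by (simp add: algebra_simps)
  also have "\<dots> = (\<Sum>j<dB. \<Sum>i<dA. \<Sum>i'<dA. \<Sum>j'<dB. cnj (\<psi> i j) * M i i' * \<psi> i' j' * N j j')"
    by (rule sum.swap)
  also have "\<dots> = (\<Sum>j<dB. \<Sum>j'<dB. \<Sum>i<dA. \<Sum>i'<dA. cnj (\<psi> i j) * M i i' * \<psi> i' j' * N j j')"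
  proof (rule sum.cong[OF refl])
    fix j
    have "(\<Sum>i<dA. \<Sum>i'<dA. \<Sum>j'<dB. cnj (\<psi> i j) * M i i' * \<psi> i' j' * N j j')
        = (\<Sum>i<dA. \<Sum>j'<dB. \<Sum>i'<dA. cnj (\<psi> i j) * M i i' * \<psi> i' j' * N j j')"
      by (rule sum.cong[OF refl], rule sum.swap)
    also have "\<dots> = (\<Sum>j'<dB. \<Sum>i<dA. \<Sum>i'<dA. cnj (\<psi> i j) * M i i' * \<psi> i' j' * N j j')"
      by (rule sum.swap)
    finally show "(\<Sum>i<dA. \<Sum>i'<dA. \<Sum>j'<dB. cnj (\<psi> i j) * M i i' * \<psi> i' j' * N j j')
        = (\<Sum>j'<dB. \<Sum>i<dA. \<Sum>i'<dA. cnj (\<psi> i j) * M i i' * \<psi> i' j' * N j j')" .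
  qed
  also have "\<dots> = (\<Sum>j<dB. \<Sum>j'<dB. Gm dA \<psi> M j j' * N j j')"
    unfolding Gm_def by (simp add: sum_distrib_right)
  finally show ?thesis .
qed

lemma qf_Gm:
  "qf {..<dB} (Gm dA \<psi> M) v = qf {..<dA} M (\<lambda>i. \<Sum>j<dB. \<psi> i j * v j)"
proof -
  have "qf {..<dA} M (\<lambda>i. \<Sum>j<dB. \<psi> i j * v j)
     = (\<Sum>i<dA. \<Sum>i'<dA. \<Sum>j<dB. \<Sum>j'<dB. cnj (v j) * (cnj (\<psi> i j) * M i i' * \<psi> i' j') * v j')"
    unfolding qf_def
  proof (intro sum.cong refl)
    fix i i'
    have "cnj (\<Sum>j<dB. \<psi> i j * v j) * M i i' * (\<Sum>j'<dB. \<psi> i' j' * v j')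
       = (\<Sum>j<dB. cnj (\<psi> i j * v j)) * (\<Sum>j'<dB. M i i' * (\<psi> i' j' * v j'))"
      by (simp only: cnj_sum sum_distrib_left mult.assoc)
    also have "\<dots> = (\<Sum>j<dB. \<Sum>j'<dB. cnj (\<psi> i j * v j) * (M i i' * (\<psi> i' j' * v j')))"
      by (rule sum_product)
    also have "\<dots> = (\<Sum>j<dB. \<Sum>j'<dB. cnj (v j) * (cnj (\<psi> i j) * M i i' * \<psi> i' j') * v j')"
      by (intro sum.cong refl) (simp add: algebra_simps)
    finally show "cnj (\<Sum>j<dB. \<psi> i j * v j) * M i i' * (\<Sum>j'<dB. \<psi> i' j' * v j')
       = (\<Sum>j<dB. \<Sum>j'<dB. cnj (v j) * (cnj (\<psi> i j) * M i i' * \<psi> i' j') * v j')" .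
  qed
  also have "\<dots> = (\<Sum>i<dA. \<Sum>j<dB. \<Sum>i'<dA. \<Sum>j'<dB. cnj (v j) * (cnj (\<psi> i j) * M i i' * \<psi> i' j') * v j')"
    by (rule sum.cong[OF refl], rule sum.swap)
  also have "\<dots> = (\<Sum>j<dB. \<Sum>i<dA. \<Sum>i'<dA. \<Sum>j'<dB. cnj (v j) * (cnj (\<psi> i j) * M i i' * \<psi> i' j') * v j')"
    by (rule sum.swap)
  also have "\<dots> = (\<Sum>j<dB. \<Sum>j'<dB. \<Sum>i<dA. \<Sum>i'<dA. cnj (v j) * (cnj (\<psi> i j) * M i i' * \<psi> i' j') * v j')"
  proof (rule sum.cong[OF refl])
    fix j
    show "(\<Sum>i<dA. \<Sum>i'<dA. \<Sum>j'<dB. cnj (v j) * (cnj (\<psi> i j) * M i i' * \<psi> i' j') * v j')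
        = (\<Sum>j'<dB. \<Sum>i<dA. \<Sum>i'<dA. cnj (v j) * (cnj (\<psi> i j) * M i i' * \<psi> i' j') * v j')"
      by (subst sum.swap, rule sum.cong[OF refl], rule sum.swap)
  qed
  also have "\<dots> = qf {..<dB} (Gm dA \<psi> M) v"
    unfolding qf_def Gm_def by (simp add: sum_distrib_left sum_distrib_right)
  finally show ?thesis by simp
qed

lemma tensor_nonneg:
  assumes "psd dA M" "psd dB N"
  shows "Re (tensor_expect dA dB \<psi> M N) \<ge> 0"
proof -
  have hN: "\<forall>i\<in>{..<dB}. \<forall>j\<in>{..<dB}. N i j = cnj (N j i)"
    using assms(2) unfolding psd_def hermitian_def lessThan_iff by blast
  have pN: "\<forall>v. Re (qf {..<dB} N v) \<ge> 0" using assms(2) unfolding psd_def qf_def by blast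
  have pG: "\<forall>v. Re (qf {..<dB} (Gm dA \<psi> M) v) \<ge> 0"
  proof
    fix v
    have "\<forall>v. Re (qf {..<dA} M v) \<ge> 0" using assms(1) unfolding psd_def qf_def by blast
    then show "Re (qf {..<dB} (Gm dA \<psi> M) v) \<ge> 0" unfolding qf_Gm by blast
  qed
  show ?thesis unfolding tensor_expect_Gm using schur_pos[OF _ hN pN pG] by simp
qed



definition Idm :: "nat \<Rightarrow> nat \<Rightarrow> complex" where "Idm i j = (if i = j then 1 else 0)"

lemma te_linM:
  "(\<Sum>a\<in>A. tensor_expect dA dB \<psi> (P a) N) = tensor_expect dA dB \<psi> (\<lambda>i i'. \<Sum>a\<in>A. P a i i') N"
  unfolding tensor_expect_def by (simp add: sum_distrib_left sum_distrib_right sum.swap[of _ A])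

lemma te_linN:
  "(\<Sum>a\<in>A. tensor_expect dA dB \<psi> M (P a)) = tensor_expect dA dB \<psi> M (\<lambda>i i'. \<Sum>a\<in>A. P a i i')"
  unfolding tensor_expect_def by (simp add: sum_distrib_left sum_distrib_right sum.swap[of _ A])

lemma te_congM:
  assumes "\<And>i i'. i < dA \<Longrightarrow> i' < dA \<Longrightarrow> M i i' = M' i i'"
  shows "tensor_expect dA dB \<psi> M N = tensor_expect dA dB \<psi> M' N"
  unfolding tensor_expect_def using assms by (intro sum.cong refl) auto

lemma te_congN:
  assumes "\<And>i i'. i < dB \<Longrightarrow> i' < dB \<Longrightarrow> N i i' = N' i i'"
  shows "tensor_expect dA dB \<psi> M N = tensor_expect dA dB \<psi> M N'"
  unfolding tensor_expect_def using assms by (intro sum.cong refl) auto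

lemma povm_sumM:
  assumes "povm dA P"
  shows "(\<Sum>a\<in>UNIV. tensor_expect dA dB \<psi> (P a) N) = tensor_expect dA dB \<psi> Idm N"
  unfolding te_linM using assms unfolding povm_def Idm_def by (intro te_congM) auto

lemma povm_sumN:
  assumes "povm dB P"
  shows "(\<Sum>a\<in>UNIV. tensor_expect dA dB \<psi> M (P a)) = tensor_expect dA dB \<psi> M Idm"
  unfolding te_linN using assms unfolding povm_def Idm_def by (intro te_congN) auto

lemma te_Id:
  "tensor_expect dA dB \<psi> Idm Idm = of_real (\<Sum>i<dA. \<Sum>j<dB. (cmod (\<psi> i j))\<^sup>2)"
proof -
  have e: "cnj (\<psi> i j) * Idm i i' * Idm j j' * \<psi> i' j' = (if j' = j then (if i' = i then cnj (\<psi> i j) * \<psi> i j else 0) else 0)" for i j i' j'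
    unfolding Idm_def by auto
  have "tensor_expect dA dB \<psi> Idm Idm = (\<Sum>i<dA. \<Sum>j<dB. cnj (\<psi> i j) * \<psi> i j)"
    unfolding tensor_expect_def e by simp
  also have "\<dots> = (\<Sum>i<dA. \<Sum>j<dB. of_real ((cmod (\<psi> i j))\<^sup>2))"
    by (intro sum.cong refl) (metis complex_norm_square mult.commute)
  finally show ?thesis by simp
qed



lemma sum_bool_split: "(\<Sum>x\<in>(UNIV::bool set). f x) = f x0 + f (\<not> x0)"
  by (cases x0) (simp_all add: UNIV_bool add.commute)

lemma classical_upper:
  fixes \<pi> :: "bool \<Rightarrow> bool \<Rightarrow> real" and V :: "'a::finite \<Rightarrow> 'b::finite \<Rightarrow> bool \<Rightarrow> bool \<Rightarrow> bool"
  shows "(\<Sum>x\<in>UNIV. \<Sum>y\<in>UNIV. \<pi> x y * (if V (\<alpha> x) (\<beta> y) x y then 1 else 0)) \<le> classical_value \<pi> V"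
proof -
  let ?C = "{(\<Sum>x\<in>UNIV. \<Sum>y\<in>UNIV. \<pi> x y * (if V (\<alpha> x) (\<beta> y) x y then 1 else 0))
      | (\<alpha> :: bool \<Rightarrow> 'a) (\<beta> :: bool \<Rightarrow> 'b). True}"
  have "?C = (\<lambda>(\<alpha>, \<beta>). (\<Sum>x\<in>UNIV. \<Sum>y\<in>UNIV. \<pi> x y * (if V (\<alpha> x) (\<beta> y) x y then 1 else 0))) ` UNIV"
    by auto
  then have "finite ?C" by simp
  then have bd: "bdd_above ?C" by (rule bdd_above_finite)
  show ?thesis unfolding classical_value_def by (rule cSup_upper[OF _ bd]) auto
qed



lemma swap4: "(\<Sum>a\<in>A. \<Sum>b\<in>B. \<Sum>c\<in>C. \<Sum>d\<in>D. \<Sum>x\<in>P. h a b c d x) = (\<Sum>x\<in>P. \<Sum>a\<in>A. \<Sum>b\<in>B. \<Sum>c\<in>C. \<Sum>d\<in>D. h a b c d x)"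
proof -
  have "(\<Sum>a\<in>A. \<Sum>b\<in>B. \<Sum>c\<in>C. \<Sum>d\<in>D. \<Sum>x\<in>P. h a b c d x) = (\<Sum>a\<in>A. \<Sum>b\<in>B. \<Sum>c\<in>C. \<Sum>x\<in>P. \<Sum>d\<in>D. h a b c d x)"
    by (rule sum.cong[OF refl], rule sum.cong[OF refl], rule sum.cong[OF refl], rule sum.swap)
  also have "\<dots> = (\<Sum>a\<in>A. \<Sum>b\<in>B. \<Sum>x\<in>P. \<Sum>c\<in>C. \<Sum>d\<in>D. h a b c d x)"
    by (rule sum.cong[OF refl], rule sum.cong[OF refl], rule sum.swap)
  also have "\<dots> = (\<Sum>a\<in>A. \<Sum>x\<in>P. \<Sum>b\<in>B. \<Sum>c\<in>C. \<Sum>d\<in>D. h a b c d x)"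
    by (rule sum.cong[OF refl], rule sum.swap)
  also have "\<dots> = (\<Sum>x\<in>P. \<Sum>a\<in>A. \<Sum>b\<in>B. \<Sum>c\<in>C. \<Sum>d\<in>D. h a b c d x)"
    by (rule sum.swap)
  finally show ?thesis .
qed

lemma sim:
  fixes p :: "bool \<Rightarrow> bool \<Rightarrow> 'a::finite \<Rightarrow> 'b::finite \<Rightarrow> real"
    and \<pi> :: "bool \<Rightarrow> bool \<Rightarrow> real" and V :: "'a \<Rightarrow> 'b \<Rightarrow> bool \<Rightarrow> bool \<Rightarrow> bool"
  assumes nn: "\<And>x y a b. p x y a b \<ge> 0"
    and mA: "\<And>x y a. (\<Sum>b\<in>UNIV. p x y a b) = pA x a"
    and mB: "\<And>x y b. (\<Sum>a\<in>UNIV. p x y a b) = pB y b"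
    and tot: "(\<Sum>a\<in>UNIV. \<Sum>b\<in>UNIV. p xz yz a b) = 1"
    and z: "\<pi> (\<not> xz) (\<not> yz) = 0"
  shows "game_payoff \<pi> V p \<le> classical_value \<pi> V"
proof -
  define X where "X = (\<not> xz)"
  define Y where "Y = (\<not> yz)"
  have Xne: "X \<noteq> xz" "Y \<noteq> yz" unfolding X_def Y_def by auto
  define a0 :: 'a where "a0 = undefined"
  define b0 :: 'b where "b0 = undefined"
  define q1 where "q1 = (\<lambda>b a'. if pB yz b = 0 then (if a' = a0 then 1 else 0) else p X yz a' b / pB yz b)"
  define q2 where "q2 = (\<lambda>a b'. if pA xz a = 0 then (if b' = b0 then 1 else 0) else p xz Y a b' / pA xz a)"
  have pBnn: "pB y b \<ge> 0" for y b using mB[of xz y b, symmetric] nn by (simp add: sum_nonneg)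
  have pAnn: "pA x a \<ge> 0" for x a using mA[of x yz a, symmetric] nn by (simp add: sum_nonneg)
  have q1nn: "q1 b a' \<ge> 0" for b a' unfolding q1_def using nn pBnn by simp
  have q2nn: "q2 a b' \<ge> 0" for a b' unfolding q2_def using nn pAnn by simp
  have q1s: "(\<Sum>a'\<in>UNIV. q1 b a') = 1" for b
  proof (cases "pB yz b = 0")
    case True then show ?thesis unfolding q1_def by simp
  next
    case False
    then show ?thesis unfolding q1_def using mB[of X yz b] by (simp add: sum_divide_distrib[symmetric])
  qed
  have q2s: "(\<Sum>b'\<in>UNIV. q2 a b') = 1" for a
  proof (cases "pA xz a = 0")
    case True then show ?thesis unfolding q2_def by simp
  next
    case False
    then show ?thesis unfolding q2_def using mA[of xz Y a] by (simp add: sum_divide_distrib[symmetric])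
  qed
  have q1m: "pB yz b * q1 b a' = p X yz a' b" for b a'
  proof (cases "pB yz b = 0")
    case True
    have "p X yz a' b \<le> (\<Sum>a\<in>UNIV. p X yz a b)" by (rule member_le_sum) (use nn in auto)
    then have "p X yz a' b = 0" using True mB[of X yz b] nn[of X yz a' b] by simp
    then show ?thesis using True by simp
  next
    case False then show ?thesis unfolding q1_def by simp
  qed
  have q2m: "pA xz a * q2 a b' = p xz Y a b'" for a b'
  proof (cases "pA xz a = 0")
    case True
    have "p xz Y a b' \<le> (\<Sum>b\<in>UNIV. p xz Y a b)" by (rule member_le_sum) (use nn in auto)
    then have "p xz Y a b' = 0" using True mA[of xz Y a] nn[of xz Y a b'] by simp
    then show ?thesis using True by simp
  next
    case False then show ?thesis unfolding q2_def by simp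
  qed
  define w where "w = (\<lambda>a b a' b'. p xz yz a b * q1 b a' * q2 a b')"
  define al where "al = (\<lambda>(a::'a) (a'::'a) x. if x = xz then a else a')"
  define be where "be = (\<lambda>(b::'b) (b'::'b) y. if y = yz then b else b')"
  define ind where "ind = (\<lambda>a b x y. if V a b x y then (1::real) else 0)"
  define cl where "cl = (\<lambda>a b a' b'. \<Sum>x\<in>UNIV. \<Sum>y\<in>UNIV. \<pi> x y * ind (al a a' x) (be b b' y) x y)"
  define I where "I = (\<lambda>x y. \<Sum>a\<in>UNIV. \<Sum>b\<in>UNIV. ind a b x y * p x y a b)"
  define J where "J = (\<lambda>x y. \<Sum>a\<in>UNIV. \<Sum>b\<in>UNIV. \<Sum>a'\<in>UNIV. \<Sum>b'\<in>UNIV. w a b a' b' * ind (al a a' x) (be b b' y) x y)"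
  have gp: "game_payoff \<pi> V p = (\<Sum>x\<in>UNIV. \<Sum>y\<in>UNIV. \<pi> x y * I x y)"
    unfolding game_payoff_def I_def ind_def by simp
  have swap: "(\<Sum>a\<in>UNIV. \<Sum>b\<in>UNIV. \<Sum>a'\<in>UNIV. \<Sum>b'\<in>UNIV. w a b a' b' * cl a b a' b')
      = (\<Sum>x\<in>UNIV. \<Sum>y\<in>UNIV. \<pi> x y * J x y)"
  proof -
    have "(\<Sum>a\<in>UNIV. \<Sum>b\<in>UNIV. \<Sum>a'\<in>UNIV. \<Sum>b'\<in>UNIV. w a b a' b' * cl a b a' b')
      = (\<Sum>a\<in>UNIV. \<Sum>b\<in>UNIV. \<Sum>a'\<in>UNIV. \<Sum>b'\<in>UNIV. \<Sum>x\<in>UNIV. \<Sum>y\<in>UNIV. \<pi> x y * (w a b a' b' * ind (al a a' x) (be b b' y) x y))"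
      unfolding cl_def by (simp add: sum_distrib_left mult.left_commute)
    also have "\<dots> = (\<Sum>x\<in>UNIV. \<Sum>a\<in>UNIV. \<Sum>b\<in>UNIV. \<Sum>a'\<in>UNIV. \<Sum>b'\<in>UNIV. \<Sum>y\<in>UNIV. \<pi> x y * (w a b a' b' * ind (al a a' x) (be b b' y) x y))"
      by (rule swap4)
    also have "\<dots> = (\<Sum>x\<in>UNIV. \<Sum>y\<in>UNIV. \<Sum>a\<in>UNIV. \<Sum>b\<in>UNIV. \<Sum>a'\<in>UNIV. \<Sum>b'\<in>UNIV. \<pi> x y * (w a b a' b' * ind (al a a' x) (be b b' y) x y))"
      by (rule sum.cong[OF refl], rule swap4)
    also have "\<dots> = (\<Sum>x\<in>UNIV. \<Sum>y\<in>UNIV. \<pi> x y * J x y)"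
      unfolding J_def by (simp add: sum_distrib_left)
    finally show ?thesis .
  qed
  have alX: "al a a' X = a'" "al a a' xz = a" for a a' unfolding al_def using Xne by auto
  have beY: "be b b' Y = b'" "be b b' yz = b" for b b' unfolding be_def using Xne by auto
  have J00: "J xz yz = I xz yz"
    unfolding J_def I_def
  proof (intro sum.cong refl)
    fix a b
    have "ind a b xz yz * p xz yz a b * (\<Sum>a'\<in>UNIV. q1 b a') * (\<Sum>b'\<in>UNIV. q2 a b') = (\<Sum>a'\<in>UNIV. \<Sum>b'\<in>UNIV. ind a b xz yz * p xz yz a b * q1 b a' * q2 a b')"
      by (simp add: sum_distrib_left sum_distrib_right) (rule sum.swap)
    then show "(\<Sum>a'\<in>UNIV. \<Sum>b'\<in>UNIV. w a b a' b' * ind (al a a' xz) (be b b' yz) xz yz) = ind a b xz yz * p xz yz a b"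
      unfolding w_def alX beY q1s q2s by (simp add: algebra_simps)
  qed
  have JX0: "J X yz = I X yz"
  proof -
    have "J X yz = (\<Sum>a\<in>UNIV. \<Sum>b\<in>UNIV. \<Sum>a'\<in>UNIV. p xz yz a b * q1 b a' * ind a' b X yz)"
      unfolding J_def
    proof (intro sum.cong refl)
      fix a b a'
      show "(\<Sum>b'\<in>UNIV. w a b a' b' * ind (al a a' X) (be b b' yz) X yz) = p xz yz a b * q1 b a' * ind a' b X yz"
      proof -
        have "(\<Sum>b'\<in>UNIV. w a b a' b' * ind (al a a' X) (be b b' yz) X yz) = (\<Sum>b'\<in>UNIV. (p xz yz a b * q1 b a' * ind a' b X yz) * q2 a b')"
          unfolding w_def alX beY by (intro sum.cong refl) (simp add: algebra_simps)
        also have "\<dots> = (p xz yz a b * q1 b a' * ind a' b X yz) * (\<Sum>b'\<in>UNIV. q2 a b')"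
          by (rule sum_distrib_left[symmetric])
        finally show ?thesis using q2s[of a] by simp
      qed
    qed
    also have "\<dots> = (\<Sum>b\<in>UNIV. \<Sum>a\<in>UNIV. \<Sum>a'\<in>UNIV. p xz yz a b * q1 b a' * ind a' b X yz)"
      by (rule sum.swap)
    also have "\<dots> = (\<Sum>b\<in>UNIV. \<Sum>a'\<in>UNIV. \<Sum>a\<in>UNIV. p xz yz a b * q1 b a' * ind a' b X yz)"
      by (rule sum.cong[OF refl], rule sum.swap)
    also have "\<dots> = (\<Sum>b\<in>UNIV. \<Sum>a'\<in>UNIV. ind a' b X yz * p X yz a' b)"
    proof (intro sum.cong refl)
      fix b a'
      have "(\<Sum>a\<in>UNIV. p xz yz a b * q1 b a' * ind a' b X yz) = (\<Sum>a\<in>UNIV. p xz yz a b) * q1 b a' * ind a' b X yz"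
        by (simp add: sum_distrib_right)
      also have "\<dots> = ind a' b X yz * p X yz a' b" using mB[of xz yz b] q1m[of b a'] by simp
      finally show "(\<Sum>a\<in>UNIV. p xz yz a b * q1 b a' * ind a' b X yz) = ind a' b X yz * p X yz a' b" .
    qed
    also have "\<dots> = I X yz" unfolding I_def by (rule sum.swap)
    finally show ?thesis .
  qed
  have J0Y: "J xz Y = I xz Y"
  proof -
    have "J xz Y = (\<Sum>a\<in>UNIV. \<Sum>b\<in>UNIV. \<Sum>b'\<in>UNIV. \<Sum>a'\<in>UNIV. w a b a' b' * ind a b' xz Y)"
      unfolding J_def alX beY by (intro sum.cong refl) (rule sum.swap)
    also have "\<dots> = (\<Sum>a\<in>UNIV. \<Sum>b\<in>UNIV. \<Sum>b'\<in>UNIV. p xz yz a b * q2 a b' * ind a b' xz Y)"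
    proof (intro sum.cong refl)
      fix a b b'
      show "(\<Sum>a'\<in>UNIV. w a b a' b' * ind a b' xz Y) = p xz yz a b * q2 a b' * ind a b' xz Y"
      proof -
        have "(\<Sum>a'\<in>UNIV. w a b a' b' * ind a b' xz Y) = (\<Sum>a'\<in>UNIV. (p xz yz a b * q2 a b' * ind a b' xz Y) * q1 b a')"
          unfolding w_def by (intro sum.cong refl) (simp add: algebra_simps)
        also have "\<dots> = (p xz yz a b * q2 a b' * ind a b' xz Y) * (\<Sum>a'\<in>UNIV. q1 b a')"
          by (rule sum_distrib_left[symmetric])
        finally show ?thesis using q1s[of b] by simp
      qed
    qed
    also have "\<dots> = (\<Sum>a\<in>UNIV. \<Sum>b'\<in>UNIV. \<Sum>b\<in>UNIV. p xz yz a b * q2 a b' * ind a b' xz Y)"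
      by (rule sum.cong[OF refl], rule sum.swap)
    also have "\<dots> = I xz Y"
      unfolding I_def
    proof (intro sum.cong refl)
      fix a b'
      have "(\<Sum>b\<in>UNIV. p xz yz a b * q2 a b' * ind a b' xz Y) = (\<Sum>b\<in>UNIV. p xz yz a b) * q2 a b' * ind a b' xz Y"
        by (simp add: sum_distrib_right)
      also have "\<dots> = ind a b' xz Y * p xz Y a b'" using mA[of xz yz a] q2m[of a b'] by simp
      finally show "(\<Sum>b\<in>UNIV. p xz yz a b * q2 a b' * ind a b' xz Y) = ind a b' xz Y * p xz Y a b'" .
    qed
    finally show ?thesis .
  qed
  have eqs: "\<pi> x y * I x y = \<pi> x y * J x y" for x y
  proof -
    have "x = xz \<or> x = X" "y = yz \<or> y = Y" unfolding X_def Y_def by auto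
    then show ?thesis using J00 JX0 J0Y z unfolding X_def Y_def by auto
  qed
  have "game_payoff \<pi> V p = (\<Sum>a\<in>UNIV. \<Sum>b\<in>UNIV. \<Sum>a'\<in>UNIV. \<Sum>b'\<in>UNIV. w a b a' b' * cl a b a' b')"
    unfolding gp swap by (intro sum.cong refl) (rule eqs)
  also have "\<dots> \<le> (\<Sum>a\<in>UNIV. \<Sum>b\<in>UNIV. \<Sum>a'\<in>UNIV. \<Sum>b'\<in>UNIV. w a b a' b' * classical_value \<pi> V)"
  proof (intro sum_mono mult_left_mono)
    fix a b a' b'
    show "cl a b a' b' \<le> classical_value \<pi> V"
      unfolding cl_def ind_def by (rule classical_upper)
    show "0 \<le> w a b a' b'" unfolding w_def using nn q1nn q2nn by simp
  qed
  also have "\<dots> = classical_value \<pi> V * (\<Sum>a\<in>UNIV. \<Sum>b\<in>UNIV. p xz yz a b * (\<Sum>a'\<in>UNIV. q1 b a') * (\<Sum>b'\<in>UNIV. q2 a b'))"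
  proof -
    have "(\<Sum>a'\<in>UNIV. \<Sum>b'\<in>UNIV. w a b a' b' * classical_value \<pi> V) = classical_value \<pi> V * (p xz yz a b * (\<Sum>a'\<in>UNIV. q1 b a') * (\<Sum>b'\<in>UNIV. q2 a b'))" for a b
    proof -
      have "p xz yz a b * (\<Sum>a'\<in>UNIV. q1 b a') * (\<Sum>b'\<in>UNIV. q2 a b') = (\<Sum>a'\<in>UNIV. \<Sum>b'\<in>UNIV. p xz yz a b * q1 b a' * q2 a b')"
        by (simp add: sum_distrib_left sum_distrib_right) (rule sum.swap)
      then show ?thesis unfolding w_def by (simp add: sum_distrib_left mult.commute)
    qed
    then show ?thesis by (simp add: sum_distrib_left)
  qed
  also have "\<dots> = classical_value \<pi> V" using tot by (simp add: q1s q2s)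
  finally show ?thesis .
qed



lemma det_in_E:
  fixes \<pi> :: "bool \<Rightarrow> bool \<Rightarrow> real" and V :: "'a::finite \<Rightarrow> 'b::finite \<Rightarrow> bool \<Rightarrow> bool \<Rightarrow> bool"
    and \<alpha> :: "bool \<Rightarrow> 'a" and \<beta> :: "bool \<Rightarrow> 'b"
  shows "\<exists>dA dB \<psi> (Am :: bool \<Rightarrow> 'a \<Rightarrow> nat \<Rightarrow> nat \<Rightarrow> complex) (Bm :: bool \<Rightarrow> 'b \<Rightarrow> nat \<Rightarrow> nat \<Rightarrow> complex).
     (\<Sum>x\<in>UNIV. \<Sum>y\<in>UNIV. \<pi> x y * (if V (\<alpha> x) (\<beta> y) x y then 1 else 0))
       = game_payoff \<pi> V (\<lambda>x y a b. Re (tensor_expect dA dB \<psi> (Am x a) (Bm y b)))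
     \<and> unit_state dA dB \<psi> \<and> (\<forall>x. povm dA (Am x)) \<and> (\<forall>y. povm dB (Bm y))"
proof (intro exI conjI)
  let ?Am = "\<lambda>x (a::'a) (i::nat) (j::nat). if a = \<alpha> x then (1::complex) else 0"
  let ?Bm = "\<lambda>y (b::'b) (i::nat) (j::nat). if b = \<beta> y then (1::complex) else 0"
  have te: "tensor_expect 1 1 (\<lambda>i j. 1) (?Am x a) (?Bm y b) = (if a = \<alpha> x then 1 else 0) * (if b = \<beta> y then 1 else 0)" for x y a b
    unfolding tensor_expect_def by simp
  have in1: "(\<Sum>a\<in>UNIV. \<Sum>b\<in>UNIV. (if V a b x y then 1 else 0) * Re ((if a = \<alpha> x then 1 else 0) * (if b = \<beta> y then 1 else 0)))
      = (if V (\<alpha> x) (\<beta> y) x y then (1::real) else 0)" for x y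
  proof -
    define c where "c = (if V (\<alpha> x) (\<beta> y) x y then (1::real) else 0)"
    have e: "(if V a b x y then 1 else 0) * Re ((if a = \<alpha> x then 1 else 0) * (if b = \<beta> y then (1::complex) else 0))
       = (if b = \<beta> y then (if a = \<alpha> x then c else 0) else 0)" for a b
      unfolding c_def by auto
    have "(\<Sum>a\<in>UNIV. \<Sum>b\<in>UNIV. (if b = \<beta> y then (if a = \<alpha> x then c else 0) else 0)) = c"
      by simp
    then show ?thesis unfolding e c_def .
  qed
  show "(\<Sum>x\<in>UNIV. \<Sum>y\<in>UNIV. \<pi> x y * (if V (\<alpha> x) (\<beta> y) x y then 1 else 0))
       = game_payoff \<pi> V (\<lambda>x y a b. Re (tensor_expect 1 1 (\<lambda>i j. 1) (?Am x a) (?Bm y b)))"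
    unfolding game_payoff_def te in1 ..
  show "unit_state 1 1 (\<lambda>i j. 1)" unfolding unit_state_def by simp
  show "\<forall>x. povm 1 (?Am x)"
    unfolding povm_def psd_def hermitian_def by (auto simp: mult.assoc[symmetric])
  show "\<forall>y. povm 1 (?Bm y)"
    unfolding povm_def psd_def hermitian_def by (auto simp: mult.assoc[symmetric])
qed



theorem mainTheorem8:
  fixes \<pi> :: "bool \<Rightarrow> bool \<Rightarrow> real"
    and V :: "'a::finite \<Rightarrow> 'b::finite \<Rightarrow> bool \<Rightarrow> bool \<Rightarrow> bool"
  assumes "prob_dist \<pi>"
    and "\<exists>X Y. \<pi> X Y = 0"
  shows "entangled_value \<pi> V = classical_value \<pi> V"
proof -
  obtain X Y where XY: "\<pi> X Y = 0" using assms(2) by blast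
  define E where "E = {game_payoff \<pi> V (\<lambda>x y a b. Re (tensor_expect dA dB \<psi> (Am x a) (Bm y b)))
      | dA dB \<psi> (Am :: bool \<Rightarrow> 'a \<Rightarrow> nat \<Rightarrow> nat \<Rightarrow> complex) (Bm :: bool \<Rightarrow> 'b \<Rightarrow> nat \<Rightarrow> nat \<Rightarrow> complex).
         unit_state dA dB \<psi> \<and> (\<forall>x. povm dA (Am x)) \<and> (\<forall>y. povm dB (Bm y))}"
  define C where "C = {(\<Sum>x\<in>UNIV. \<Sum>y\<in>UNIV. \<pi> x y * (if V (\<alpha> x) (\<beta> y) x y then 1 else 0))
      | (\<alpha> :: bool \<Rightarrow> 'a) (\<beta> :: bool \<Rightarrow> 'b). True}"
  have ev: "entangled_value \<pi> V = Sup E" unfolding entangled_value_def E_def ..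
  have cv: "classical_value \<pi> V = Sup C" unfolding classical_value_def C_def ..
  have CE: "C \<subseteq> E"
  proof
    fix c assume "c \<in> C"
    then obtain \<alpha> \<beta> where c: "c = (\<Sum>x\<in>UNIV. \<Sum>y\<in>UNIV. \<pi> x y * (if V (\<alpha> x) (\<beta> y) x y then 1 else 0))"
      unfolding C_def by blast
    show "c \<in> E" using det_in_E[of \<pi> V \<alpha> \<beta>] unfolding c E_def by blast
  qed
  have Cne: "C \<noteq> {}" unfolding C_def by blast
  have upper: "e \<le> classical_value \<pi> V" if "e \<in> E" for e
  proof -
    obtain dA dB \<psi> and Am :: "bool \<Rightarrow> 'a \<Rightarrow> nat \<Rightarrow> nat \<Rightarrow> complex" and Bm :: "bool \<Rightarrow> 'b \<Rightarrow> nat \<Rightarrow> nat \<Rightarrow> complex"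
      where e: "e = game_payoff \<pi> V (\<lambda>x y a b. Re (tensor_expect dA dB \<psi> (Am x a) (Bm y b)))"
        and us: "unit_state dA dB \<psi>" and pA: "\<forall>x. povm dA (Am x)" and pB: "\<forall>y. povm dB (Bm y)"
      using \<open>e \<in> E\<close> unfolding E_def by blast
    let ?p = "\<lambda>x y a b. Re (tensor_expect dA dB \<psi> (Am x a) (Bm y b))"
    show ?thesis unfolding e
    proof (rule sim[where pA = "\<lambda>x a. Re (tensor_expect dA dB \<psi> (Am x a) Idm)"
          and pB = "\<lambda>y b. Re (tensor_expect dA dB \<psi> Idm (Bm y b))" and xz = "\<not> X" and yz = "\<not> Y"])
      fix x y a b
      show "?p x y a b \<ge> 0"
        using pA pB unfolding povm_def by (intro tensor_nonneg) auto
    next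
      fix x y a
      show "(\<Sum>b\<in>UNIV. ?p x y a b) = Re (tensor_expect dA dB \<psi> (Am x a) Idm)"
        using arg_cong[OF povm_sumN[OF pB[rule_format, of y], of dA \<psi> "Am x a"], of Re] by simp
    next
      fix x y b
      show "(\<Sum>a\<in>UNIV. ?p x y a b) = Re (tensor_expect dA dB \<psi> Idm (Bm y b))"
        using arg_cong[OF povm_sumM[OF pA[rule_format, of x], of dB \<psi> "Bm y b"], of Re] by simp
    next
      have "(\<Sum>a\<in>UNIV. \<Sum>b\<in>UNIV. ?p (\<not> X) (\<not> Y) a b) = Re (\<Sum>a\<in>UNIV. tensor_expect dA dB \<psi> (Am (\<not> X) a) Idm)"
      proof -
        have "(\<Sum>b\<in>UNIV. ?p (\<not> X) (\<not> Y) a b) = Re (tensor_expect dA dB \<psi> (Am (\<not> X) a) Idm)" for a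
          using arg_cong[OF povm_sumN[OF pB[rule_format, of "\<not> Y"], of dA \<psi> "Am (\<not> X) a"], of Re] by simp
        then show ?thesis by simp
      qed
      also have "\<dots> = Re (tensor_expect dA dB \<psi> Idm Idm)"
        using arg_cong[OF povm_sumM[OF pA[rule_format, of "\<not> X"], of dB \<psi> Idm], of Re] by simp
      also have "\<dots> = 1" unfolding te_Id using us unfolding unit_state_def by simp
      finally show "(\<Sum>a\<in>UNIV. \<Sum>b\<in>UNIV. ?p (\<not> X) (\<not> Y) a b) = 1" .
    next
      show "\<pi> (\<not> \<not> X) (\<not> \<not> Y) = 0" using XY by simp
    qed
  qed
  have Ene: "E \<noteq> {}" using CE Cne by blast
  have bdE: "bdd_above E" using upper by (auto simp: bdd_above_def)
  have "Sup E \<le> classical_value \<pi> V" using Ene upper by (rule cSup_least)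
  moreover have "Sup C \<le> Sup E" using Cne bdE CE by (rule cSup_subset_mono)
  ultimately show ?thesis using ev cv by simp
qed


end
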